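(* Fix $\delta\in(0,1)$. Let $t\ge1$ and integers $l_1,\dots,l_t$, and consider unit vectors $\mathbf a_{i,j}\in\mathbb R^m$, $i\in\{1,\dots,t\}$, $j\in\{1,\dots,l_i\}$, in general position, such that $\sum_{j}\mathbf a_{i,j}=0$ for each $i$, and $\mathbf a_{i,j}\perp\mathbf a_{i',j'}$ whenever $i\ne i'$. Let unit vectors $\mathbf v_1,\dots,\mathbf v_t\in\mathbb R^m$ be orthogonal to each other and to all $\mathbf a_{i,j}$. Then there are positive scalars $\alpha_i,\beta_i$, $i\in\{1,\dots,t\}$, such that the matrix $\mathbf A$ whose columns are the vectors $\alpha_i\mathbf a_{i,j}+\beta_i\mathbf v_i$ over all $i,j$ satisfies, for each $i\in\{1,\dots,t\}$, \[ \min_{|S|=k_i}\frac{\mathrm{Er}_{\mathbf A}(S)}{\mathrm{OPT}_{k_i}}\ge(1-\delta)\,l_i,\qquad\text{where }k_i=l_1+\dots+l_i-1. \]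
   Context: For a matrix $\mathbf A$ with $n$ columns $\mathbf a_1,\dots,\mathbf a_n$ and $S\subseteq\{1,\dots,n\}$, $\mathbf P_S$ is the orthogonal projection onto $\mathrm{span}\{\mathbf a_i:i\in S\}$, $\mathrm{Er}_{\mathbf A}(S)=\|\mathbf A-\mathbf P_S\mathbf A\|_F^2$, and $\mathrm{OPT}_k=\min_{\mathrm{rank}(\mathbf B)=k}\|\mathbf A-\mathbf B\|_F^2$. The minimum is over column index subsets $S$ of size $k_i$. *)

theory Defs
  imports "HOL-Analysis.Analysis"
begin

definition orth_proj :: "('a::real_inner) set \<Rightarrow> 'a \<Rightarrow> 'a" where
  "orth_proj W x = (THE y. y \<in> W \<and> (\<forall>w\<in>W. (x - y) \<bullet> w = 0))"

text \<open>A matrix is given by its columns: a map col from a finite column index set C to vectors.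
  Er_A(S) = squared Frobenius norm of A - P_S A, where P_S projects onto the span of the columns in S.\<close>
definition Er :: "('i \<Rightarrow> 'a::real_inner) \<Rightarrow> 'i set \<Rightarrow> 'i set \<Rightarrow> real" where
  "Er col C S = (\<Sum>c\<in>C. (norm (col c - orth_proj (span (col ` S)) (col c)))\<^sup>2)"

definition OPT :: "('i \<Rightarrow> 'a::euclidean_space) \<Rightarrow> 'i set \<Rightarrow> nat \<Rightarrow> real" where
  "OPT col C k = Inf {(\<Sum>c\<in>C. (norm (col c - B c))\<^sup>2) | B. dim (span (B ` C)) = k}"

end

theory Submission
  imports Defs
begin

definition fam_indep :: "('i \<Rightarrow> 'a::real_vector) \<Rightarrow> 'i set \<Rightarrow> bool" where
  "fam_indep f I \<longleftrightarrow> (\<forall>c. (\<Sum>x\<in>I. c x *\<^sub>R f x) = 0 \<longrightarrow> (\<forall>x\<in>I. c x = 0))"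

lemma fam_indep_inj:
  assumes "finite I" "fam_indep f I" shows "inj_on f I"
proof (rule inj_onI, rule ccontr)
  fix x y assume xy: "x \<in> I" "y \<in> I" "f x = f y" "x \<noteq> y"
  define c where "c = (\<lambda>z. if z = x then (1::real) else if z = y then -1 else 0)"
  have "(\<Sum>z\<in>I. c z *\<^sub>R f z) = (\<Sum>z\<in>I. (if z = x then f z else 0) - (if z = y then f z else 0))"
    by (rule sum.cong[OF refl]) (use xy(4) in \<open>simp add: c_def\<close>)
  also have "\<dots> = f x - f y" using xy assms(1) by (simp add: sum_subtractf)
  finally have "(\<Sum>z\<in>I. c z *\<^sub>R f z) = 0" using xy by simp
  then have "c x = 0" using assms(2) xy unfolding fam_indep_def by blast
  then show False by (simp add: c_def)
qed

lemma fam_indep_independent: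
  assumes "finite I" "fam_indep f I" shows "independent (f ` I)"
proof
  assume "dependent (f ` I)"
  then obtain u w where uw: "w \<in> f ` I" "u w \<noteq> 0" "(\<Sum>v\<in>f ` I. u v *\<^sub>R v) = 0"
    using dependent_finite[of "f ` I"] assms(1) by auto
  have inj: "inj_on f I" using fam_indep_inj assms by blast
  have "(\<Sum>x\<in>I. u (f x) *\<^sub>R f x) = 0" using uw(3) sum.reindex[OF inj, of "\<lambda>v. u v *\<^sub>R v"] by simp
  moreover have "\<forall>c. (\<Sum>x\<in>I. c x *\<^sub>R f x) = 0 \<longrightarrow> (\<forall>x\<in>I. c x = 0)"
    using assms(2) by (simp add: fam_indep_def)
  ultimately have "\<forall>x\<in>I. u (f x) = 0" by (rule mp[OF spec[of _ "\<lambda>x. u (f x)"], rotated])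
  then show False using uw by auto
qed

lemma fam_functional:
  fixes f :: "'i \<Rightarrow> 'a::euclidean_space" and h :: "'i \<Rightarrow> real"
  assumes "finite I" "fam_indep f I"
  shows "\<exists>g. linear g \<and> (\<forall>x\<in>I. g (f x) = h x) \<and> (\<exists>K. \<forall>z. \<bar>g z\<bar> \<le> K * norm z)"
proof -
  have inj: "inj_on f I" using fam_indep_inj assms by blast
  obtain g where g: "linear g" "\<forall>y\<in>f ` I. g y = (h \<circ> inv_into I f) y"
    using linear_independent_extend[OF fam_indep_independent[OF assms]] by blast
  have "\<forall>x\<in>I. g (f x) = h x" using g(2) inj by auto
  moreover obtain K where "\<forall>z. norm (g z) \<le> K * norm z" using linear_bounded[OF g(1)] by blast
  ultimately show ?thesis using g(1) by auto
qed

lemma fam_coeff_bound: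
  fixes f :: "'i \<Rightarrow> 'a::euclidean_space"
  assumes "finite I" "fam_indep f I"
  shows "\<exists>K. \<forall>c. \<forall>x\<in>I. \<bar>c x\<bar> \<le> K * norm (\<Sum>y\<in>I. c y *\<^sub>R f y)"
proof -
  have "\<forall>x\<in>I. \<exists>K. \<forall>c. \<bar>c x\<bar> \<le> K * norm (\<Sum>y\<in>I. c y *\<^sub>R f y)"
  proof
    fix x assume x: "x \<in> I"
    obtain g K where g: "linear g" "\<forall>y\<in>I. g (f y) = (if y = x then 1 else 0)"
      "\<forall>z. \<bar>g z\<bar> \<le> K * norm z"
      using fam_functional[OF assms, of "\<lambda>y. if y = x then 1 else 0"] by blast
    have "\<forall>c. g (\<Sum>y\<in>I. c y *\<^sub>R f y) = c x"
    proof
      fix c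
      have "g (\<Sum>y\<in>I. c y *\<^sub>R f y) = (\<Sum>y\<in>I. c y * g (f y))"
        by (simp add: linear_sum[OF g(1)] linear_scale[OF g(1)])
      also have "\<dots> = (\<Sum>y\<in>I. if y = x then c y else 0)"
        by (rule sum.cong) (auto simp: g(2))
      also have "\<dots> = c x" using x assms(1) by simp
      finally show "g (\<Sum>y\<in>I. c y *\<^sub>R f y) = c x" .
    qed
    then show "\<exists>K. \<forall>c. \<bar>c x\<bar> \<le> K * norm (\<Sum>y\<in>I. c y *\<^sub>R f y)" using g(3) by metis
  qed
  then obtain Kf where Kf: "\<forall>x\<in>I. \<forall>c. \<bar>c x\<bar> \<le> Kf x * norm (\<Sum>y\<in>I. c y *\<^sub>R f y)"
    by metis
  show ?thesis
  proof (intro exI allI ballI)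
    fix c x assume x: "x \<in> I"
    have "Kf x \<le> (\<Sum>y\<in>I. \<bar>Kf y\<bar>)"
      using member_le_sum[of x I "\<lambda>y. \<bar>Kf y\<bar>"] x assms(1) by auto
    then have "Kf x * norm (\<Sum>y\<in>I. c y *\<^sub>R f y) \<le> (\<Sum>y\<in>I. \<bar>Kf y\<bar>) * norm (\<Sum>y\<in>I. c y *\<^sub>R f y)"
      by (simp add: mult_right_mono)
    then show "\<bar>c x\<bar> \<le> (\<Sum>y\<in>I. \<bar>Kf y\<bar>) * norm (\<Sum>y\<in>I. c y *\<^sub>R f y)"
      using Kf x by (meson order_trans)
  qed
qed

lemma orth_proj_in:
  fixes x :: "'a::euclidean_space"
  shows "orth_proj (span X) x \<in> span X"
proof -
  obtain y z where yz: "y \<in> span X" "\<And>w. w \<in> span X \<Longrightarrow> orthogonal z w" "x = y + z"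
    using orthogonal_subspace_decomp_exists[of X x] by blast
  have ex: "\<exists>!y. y \<in> span X \<and> (\<forall>w\<in>span X. (x - y) \<bullet> w = 0)"
  proof (rule ex1I[of _ y])
    show "y \<in> span X \<and> (\<forall>w\<in>span X. (x - y) \<bullet> w = 0)"
      using yz by (auto simp: orthogonal_def)
  next
    fix y' assume y': "y' \<in> span X \<and> (\<forall>w\<in>span X. (x - y') \<bullet> w = 0)"
    have d: "y' - y \<in> span X" using y' yz(1) by (simp add: span_diff)
    have "(x - y) \<bullet> (y' - y) = 0" using yz d by (auto simp: orthogonal_def)
    moreover have "(x - y') \<bullet> (y' - y) = 0" using y' d by blast
    ultimately have "(y' - y) \<bullet> (y' - y) = 0" by (simp add: inner_diff_left inner_diff_right)
    then show "y' = y" by simp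
  qed
  show ?thesis unfolding orth_proj_def using theI'[OF ex] by blast
qed

lemma Er_ge_term:
  fixes col :: "'i \<Rightarrow> 'a::euclidean_space"
  assumes "finite C" "c0 \<in> C"
  shows "(norm (col c0 - orth_proj (span (col ` S)) (col c0)))\<^sup>2 \<le> Er col C S"
  unfolding Er_def
  by (rule member_le_sum[OF assms(2) _ assms(1), of "\<lambda>c. (norm (col c - orth_proj (span (col ` S)) (col c)))\<^sup>2"]) simp

lemma split_dist:
  fixes x :: "'a::euclidean_space"
  assumes "y \<in> span (Y1 \<union> Y2)" "x \<in> span E" "Y1 \<subseteq> span E"
    "\<forall>u\<in>Y2. \<forall>w\<in>E. u \<bullet> w = 0"
  shows "\<exists>y1\<in>span Y1. (norm (x - y1))\<^sup>2 \<le> (norm (x - y))\<^sup>2"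
proof -
  obtain y1 y2 where y: "y = y1 + y2" "y1 \<in> span Y1" "y2 \<in> span Y2"
    using assms(1) unfolding span_Un by blast
  have "span Y1 \<subseteq> span E" using assms(3) by (metis span_mono span_span)
  then have xy1: "x - y1 \<in> span E" using assms(2) y(2) by (auto intro: span_diff)
  have "\<forall>w\<in>E. orthogonal w y2"
  proof
    fix w assume "w \<in> E"
    then show "orthogonal w y2" using orthogonal_to_span[OF y(3)] assms(4)
      by (simp add: orthogonal_def inner_commute)
  qed
  then have o: "orthogonal y2 (x - y1)"
    using orthogonal_to_span[OF xy1] by (simp add: orthogonal_commute)
  have e: "x - y = (x - y1) + (- y2)" unfolding y(1) by simp
  have "orthogonal (x - y1) (- y2)" using o by (simp add: orthogonal_def inner_commute)
  then have "(norm (x - y))\<^sup>2 = (norm (x - y1))\<^sup>2 + (norm y2)\<^sup>2"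
    using norm_add_Pythagorean by (metis e norm_minus_cancel)
  then show ?thesis using y(2) by (intro bexI[of _ y1]) auto
qed

lemma block_bound:
  fixes a :: "'j \<Rightarrow> 'a::euclidean_space" and v :: 'a
  assumes "norm v = 1" "\<forall>j\<in>J. a j \<bullet> v = 0" "linear g" "\<forall>j\<in>J. g (a j) = 1"
    "\<forall>z. \<bar>g z\<bar> \<le> K * norm z" "\<alpha> > 0" "\<beta> \<ge> 0"
    "t \<in> span ((\<lambda>j. \<alpha> *\<^sub>R a j + \<beta> *\<^sub>R v) ` J)"
  shows "(norm (v - t))\<^sup>2 \<ge> 1 - (\<beta> * K / \<alpha>)\<^sup>2"
proof -
  define \<phi> where "\<phi> = (\<lambda>x. \<beta> * g (x - (x \<bullet> v) *\<^sub>R v) - \<alpha> * (x \<bullet> v))"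
  have vv: "v \<bullet> v = 1" using assms(1) by (simp add: dot_square_norm)
  have lin: "linear \<phi>"
    unfolding \<phi>_def
  proof (rule linearI)
    fix x y :: 'a
    have "x + y - ((x + y) \<bullet> v) *\<^sub>R v = (x - (x \<bullet> v) *\<^sub>R v) + (y - (y \<bullet> v) *\<^sub>R v)"
      by (simp add: inner_add_left algebra_simps)
    then have "g (x + y - ((x + y) \<bullet> v) *\<^sub>R v) = g (x - (x \<bullet> v) *\<^sub>R v) + g (y - (y \<bullet> v) *\<^sub>R v)"
      by (simp only: linear_add[OF assms(3)])
    then show "\<beta> * g (x + y - ((x + y) \<bullet> v) *\<^sub>R v) - \<alpha> * ((x + y) \<bullet> v) =
      \<beta> * g (x - (x \<bullet> v) *\<^sub>R v) - \<alpha> * (x \<bullet> v) + (\<beta> * g (y - (y \<bullet> v) *\<^sub>R v) - \<alpha> * (y \<bullet> v))"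
      unfolding \<open>g (x + y - _) = _\<close> by (simp add: inner_add_left algebra_simps)
  next
    fix r :: real and x :: 'a
    have "r *\<^sub>R x - ((r *\<^sub>R x) \<bullet> v) *\<^sub>R v = r *\<^sub>R (x - (x \<bullet> v) *\<^sub>R v)"
      by (simp add: algebra_simps)
    then have "g (r *\<^sub>R x - ((r *\<^sub>R x) \<bullet> v) *\<^sub>R v) = r * g (x - (x \<bullet> v) *\<^sub>R v)"
      using linear_scale[OF assms(3), of r "x - (x \<bullet> v) *\<^sub>R v"] by simp
    then show "\<beta> * g (r *\<^sub>R x - (r *\<^sub>R x \<bullet> v) *\<^sub>R v) - \<alpha> * (r *\<^sub>R x \<bullet> v) =
      r *\<^sub>R (\<beta> * g (x - (x \<bullet> v) *\<^sub>R v) - \<alpha> * (x \<bullet> v))"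
      unfolding \<open>g (r *\<^sub>R x - _) = _\<close> by (simp add: algebra_simps)
  qed
  have "\<phi> t = (\<lambda>_. 0) t"
  proof (rule linear_eq_on[OF lin _ assms(8)])
    show "linear (\<lambda>_. 0::real)" by (simp add: linear_zero)
  next
    fix b assume "b \<in> (\<lambda>j. \<alpha> *\<^sub>R a j + \<beta> *\<^sub>R v) ` J"
    then obtain j where j: "j \<in> J" "b = \<alpha> *\<^sub>R a j + \<beta> *\<^sub>R v" by blast
    have bv: "b \<bullet> v = \<beta>" using j assms(2) vv by (simp add: inner_add_left)
    have "b - (b \<bullet> v) *\<^sub>R v = \<alpha> *\<^sub>R a j" using j bv by simp
    then show "\<phi> b = 0" unfolding \<phi>_def using bv j assms(4) linear_scale[OF assms(3)] by simp
  qed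
  define p where "p = t \<bullet> v"
  define w where "w = t - p *\<^sub>R v"
  define q where "q = norm w"
  define \<epsilon> where "\<epsilon> = \<beta> * K / \<alpha>"
  have "\<alpha> * p = \<beta> * g w" using \<open>\<phi> t = _\<close> unfolding \<phi>_def p_def w_def by simp
  then have "\<alpha> * \<bar>p\<bar> \<le> \<beta> * (K * q)"
    using assms(5)[rule_format, of w] assms(7) unfolding q_def
    by (metis abs_mult abs_of_nonneg assms(6) less_imp_le mult_left_mono)
  then have pq: "\<bar>p\<bar> \<le> \<epsilon> * q" using assms(6) unfolding \<epsilon>_def
    by (simp add: field_simps)
  have wv: "w \<bullet> v = 0" unfolding w_def p_def using vv by (simp add: inner_diff_left)
  have e2: "v - t = (1 - p) *\<^sub>R v + (- w)" unfolding w_def by (simp add: algebra_simps)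
  have ow: "orthogonal ((1 - p) *\<^sub>R v) (- w)" using wv by (simp add: orthogonal_def inner_commute)
  then have "(norm (v - t))\<^sup>2 = (norm ((1 - p) *\<^sub>R v))\<^sup>2 + q\<^sup>2"
    using norm_add_Pythagorean[OF ow] unfolding q_def by (metis e2 norm_minus_cancel)
  also have "(norm ((1 - p) *\<^sub>R v))\<^sup>2 = (1 - p)\<^sup>2" using assms(1) by simp
  finally have "(norm (v - t))\<^sup>2 = (1 - p)\<^sup>2 + q\<^sup>2" .
  moreover have "(1 - p)\<^sup>2 + q\<^sup>2 \<ge> 1 - \<epsilon>\<^sup>2"
  proof -
    have "(1 - p)\<^sup>2 \<ge> 1 - 2 * \<bar>p\<bar>" by (cases "p \<ge> 0") (auto simp: power2_eq_square algebra_simps)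
    moreover have "(q - \<epsilon>)\<^sup>2 \<ge> 0" by simp
    ultimately show ?thesis using pq by (simp add: power2_eq_square algebra_simps)
  qed
  ultimately show ?thesis unfolding \<epsilon>_def by simp
qed

lemma fam_indep_blocks:
  fixes f :: "('r \<times> 'j) \<Rightarrow> 'a::real_inner"
  assumes "finite R" "\<forall>r\<in>R. finite (J r)" "\<forall>r\<in>R. fam_indep (\<lambda>j. f (r, j)) (J r)"
    "\<forall>r\<in>R. \<forall>r'\<in>R. r \<noteq> r' \<longrightarrow> (\<forall>j\<in>J r. \<forall>j'\<in>J r'. f (r, j) \<bullet> f (r', j') = 0)"
  shows "fam_indep f (Sigma R J)"
  unfolding fam_indep_def
proof (intro allI impI ballI)
  fix c x assume sum0: "(\<Sum>x\<in>Sigma R J. c x *\<^sub>R f x) = 0" and x: "x \<in> Sigma R J"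
  define y where "y = (\<lambda>r. \<Sum>j\<in>J r. c (r, j) *\<^sub>R f (r, j))"
  have "(\<Sum>r\<in>R. y r) = (\<Sum>(r, j)\<in>Sigma R J. c (r, j) *\<^sub>R f (r, j))"
    unfolding y_def by (rule sum.Sigma[OF assms(1,2)])
  also have "\<dots> = (\<Sum>x\<in>Sigma R J. c x *\<^sub>R f x)" by (simp add: case_prod_beta')
  finally have ys: "(\<Sum>r\<in>R. y r) = 0" using sum0 by simp
  obtain r0 j0 where x': "x = (r0, j0)" "r0 \<in> R" "j0 \<in> J r0" using x by auto
  have orth: "y r0 \<bullet> y r = 0" if "r \<in> R" "r \<noteq> r0" for r
    unfolding y_def using assms(4) that x'(2)
    by (auto simp: inner_sum_left inner_sum_right intro!: sum.neutral)
  have "0 = y r0 \<bullet> (\<Sum>r\<in>R. y r)" using ys by simp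
  also have "\<dots> = (\<Sum>r\<in>R. y r0 \<bullet> y r)" by (simp add: inner_sum_right)
  also have "\<dots> = y r0 \<bullet> y r0 + (\<Sum>r\<in>R - {r0}. y r0 \<bullet> y r)"
    using assms(1) x'(2) by (simp add: sum.remove)
  also have "(\<Sum>r\<in>R - {r0}. y r0 \<bullet> y r) = 0" using orth by (intro sum.neutral) auto
  finally have "y r0 = 0" by simp
  then have "\<forall>j\<in>J r0. c (r0, j) = 0"
  proof -
    have fr: "\<forall>c'. (\<Sum>j\<in>J r0. c' j *\<^sub>R f (r0, j)) = 0 \<longrightarrow> (\<forall>j\<in>J r0. c' j = 0)"
      using assms(3) x'(2) unfolding fam_indep_def by blast
    show ?thesis using spec[OF fr, of "\<lambda>j. c (r0, j)"] \<open>y r0 = 0\<close> unfolding y_def by simp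
  qed
  then show "c x = 0" using x' by simp
qed

lemma col_block_indep:
  fixes a :: "nat \<Rightarrow> 'a::real_inner"
  assumes "l \<ge> 1" "(\<Sum>j\<in>{1..l}. a j) = 0" "fam_indep a {1..l - 1}"
    "\<forall>j\<in>{1..l}. a j \<bullet> v = 0" "norm v = 1" "\<alpha> > 0" "\<beta> > 0"
  shows "fam_indep (\<lambda>j. \<alpha> *\<^sub>R a j + \<beta> *\<^sub>R v) {1..l}"
  unfolding fam_indep_def
proof (intro allI impI)
  fix c assume h: "(\<Sum>j\<in>{1..l}. c j *\<^sub>R (\<alpha> *\<^sub>R a j + \<beta> *\<^sub>R v)) = 0"
  have vv: "v \<bullet> v = 1" using assms(5) by (simp add: dot_square_norm)
  have e: "(\<Sum>j\<in>{1..l}. c j *\<^sub>R (\<alpha> *\<^sub>R a j + \<beta> *\<^sub>R v))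
      = \<alpha> *\<^sub>R (\<Sum>j\<in>{1..l}. c j *\<^sub>R a j) + (\<beta> * (\<Sum>j\<in>{1..l}. c j)) *\<^sub>R v"
  proof -
    have "(\<Sum>j\<in>{1..l}. c j *\<^sub>R (\<alpha> *\<^sub>R a j + \<beta> *\<^sub>R v))
        = (\<Sum>j\<in>{1..l}. \<alpha> *\<^sub>R (c j *\<^sub>R a j) + (\<beta> * c j) *\<^sub>R v)"
      by (rule sum.cong[OF refl]) (simp add: scaleR_add_right mult.commute[of \<alpha>] mult.commute[of \<beta>])
    also have "\<dots> = (\<Sum>j\<in>{1..l}. \<alpha> *\<^sub>R (c j *\<^sub>R a j)) + (\<Sum>j\<in>{1..l}. (\<beta> * c j) *\<^sub>R v)"
      by (rule sum.distrib)
    also have "(\<Sum>j\<in>{1..l}. \<alpha> *\<^sub>R (c j *\<^sub>R a j)) = \<alpha> *\<^sub>R (\<Sum>j\<in>{1..l}. c j *\<^sub>R a j)"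
      by (rule scaleR_sum_right[symmetric])
    also have "(\<Sum>j\<in>{1..l}. (\<beta> * c j) *\<^sub>R v) = (\<Sum>j\<in>{1..l}. \<beta> * c j) *\<^sub>R v"
      by (rule scaleR_sum_left[symmetric])
    also have "(\<Sum>j\<in>{1..l}. \<beta> * c j) = \<beta> * (\<Sum>j\<in>{1..l}. c j)"
      by (rule sum_distrib_left[symmetric])
    finally show ?thesis .
  qed
  have "(\<Sum>j\<in>{1..l}. c j *\<^sub>R a j) \<bullet> v = 0"
    using assms(4) by (simp add: inner_sum_left)
  then have "0 = (\<alpha> *\<^sub>R (\<Sum>j\<in>{1..l}. c j *\<^sub>R a j) + (\<beta> * (\<Sum>j\<in>{1..l}. c j)) *\<^sub>R v) \<bullet> v"
    using h e by simp
  also have "\<dots> = \<beta> * (\<Sum>j\<in>{1..l}. c j)"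
    using \<open>(\<Sum>j\<in>{1..l}. c j *\<^sub>R a j) \<bullet> v = 0\<close> vv by (simp add: inner_add_left)
  finally have sc: "(\<Sum>j\<in>{1..l}. c j) = 0" using assms(7) by simp
  then have sa: "(\<Sum>j\<in>{1..l}. c j *\<^sub>R a j) = 0" using h e assms(6) by simp
  have "(\<Sum>j\<in>{1..l}. (c j - c l) *\<^sub>R a j) = (\<Sum>j\<in>{1..l}. c j *\<^sub>R a j) - c l *\<^sub>R (\<Sum>j\<in>{1..l}. a j)"
    by (simp add: scaleR_diff_left sum_subtractf scaleR_sum_right)
  then have s0: "(\<Sum>j\<in>{1..l}. (c j - c l) *\<^sub>R a j) = 0" using sa assms(2) by simp
  have lset: "{1..l} = insert l {1..l - 1}" using assms(1) by auto
  have "(\<Sum>j\<in>{1..l}. (c j - c l) *\<^sub>R a j) = (\<Sum>j\<in>{1..l - 1}. (c j - c l) *\<^sub>R a j)"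
    unfolding lset by (subst sum.insert) auto
  then have s1: "(\<Sum>j\<in>{1..l - 1}. (c j - c l) *\<^sub>R a j) = 0" using s0 by simp
  have fr: "\<forall>c'. (\<Sum>j\<in>{1..l - 1}. c' j *\<^sub>R a j) = 0 \<longrightarrow> (\<forall>j\<in>{1..l - 1}. c' j = 0)"
    using assms(3) unfolding fam_indep_def by blast
  have d0: "\<forall>j\<in>{1..l - 1}. c j - c l = 0" using spec[OF fr, of "\<lambda>j. c j - c l"] s1 by blast
  have eq: "\<forall>j\<in>{1..l}. c j = c l"
  proof
    fix j assume "j \<in> {1..l}"
    then have "j = l \<or> j \<in> {1..l - 1}" by auto
    then show "c j = c l" using d0 by auto
  qed
  have "(\<Sum>j\<in>{1..l}. c j) = (\<Sum>j\<in>{1..l}. c l)" by (rule sum.cong[OF refl]) (use eq in blast)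
  then have "(\<Sum>j\<in>{1..l}. c j) = real l * c l" by simp
  then have cl: "c l = 0" using sc assms(1) by simp
  show "\<forall>j\<in>{1..l}. c j = 0"
  proof
    fix j assume "j \<in> {1..l}"
    then have "c j = c l" using eq by blast
    then show "c j = 0" using cl by simp
  qed
qed

lemma OPT_pos:
  fixes col :: "'i \<Rightarrow> 'a::euclidean_space"
  assumes "finite C" "fam_indep col C" "k < card C"
  shows "\<exists>\<epsilon>>0. \<forall>B. dim (span (B ` C)) = k \<longrightarrow> \<epsilon> \<le> (\<Sum>c\<in>C. (norm (col c - B c))\<^sup>2)"
proof -
  obtain K0 where K0: "\<forall>c. \<forall>x\<in>C. \<bar>c x\<bar> \<le> K0 * norm (\<Sum>y\<in>C. c y *\<^sub>R col y)"
    using fam_coeff_bound[OF assms(1,2)] by blast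
  define K where "K = \<bar>K0\<bar> + 1"
  have Kpos: "K > 0" unfolding K_def by simp
  have K: "\<forall>c. \<forall>x\<in>C. \<bar>c x\<bar> \<le> K * norm (\<Sum>y\<in>C. c y *\<^sub>R col y)"
  proof (intro allI ballI)
    fix c x assume "x \<in> C"
    then have "\<bar>c x\<bar> \<le> K0 * norm (\<Sum>y\<in>C. c y *\<^sub>R col y)" using K0 by blast
    also have "\<dots> \<le> K * norm (\<Sum>y\<in>C. c y *\<^sub>R col y)"
      unfolding K_def by (intro mult_right_mono) auto
    finally show "\<bar>c x\<bar> \<le> K * norm (\<Sum>y\<in>C. c y *\<^sub>R col y)" .
  qed
  define n where "n = card C"
  have npos: "n > 0" using assms(3) unfolding n_def by simp
  have Cne: "C \<noteq> {}" using npos unfolding n_def by auto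
  define \<epsilon> where "\<epsilon> = (1 / (K * n))\<^sup>2"
  show ?thesis
  proof (intro exI[of _ \<epsilon>] conjI allI impI)
    show "\<epsilon> > 0" unfolding \<epsilon>_def using Kpos npos by simp
  next
    fix B :: "'i \<Rightarrow> 'a" assume dB: "dim (span (B ` C)) = k"
    have "\<not> fam_indep B C"
    proof
      assume fi: "fam_indep B C"
      have "dim (span (B ` C)) = card (B ` C)"
        using dim_span_eq_card_independent[OF fam_indep_independent[OF assms(1) fi]] .
      also have "\<dots> = card C" using card_image[OF fam_indep_inj[OF assms(1) fi]] .
      finally show False using dB assms(3) by simp
    qed
    then obtain lam where lam: "(\<Sum>x\<in>C. lam x *\<^sub>R B x) = 0" "\<exists>x\<in>C. lam x \<noteq> 0"
      unfolding fam_indep_def by blast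
    have "Max ((\<lambda>c. \<bar>lam c\<bar>) ` C) \<in> (\<lambda>c. \<bar>lam c\<bar>) ` C" using assms(1) Cne by (intro Max_in) auto
    then obtain c0 where c0a: "c0 \<in> C" "\<bar>lam c0\<bar> = Max ((\<lambda>c. \<bar>lam c\<bar>) ` C)" by auto
    have "\<forall>c\<in>C. \<bar>lam c\<bar> \<le> \<bar>lam c0\<bar>" unfolding c0a(2) using assms(1) by (auto intro!: Max_ge)
    note c0 = c0a(1) this
    show "\<epsilon> \<le> (\<Sum>c\<in>C. (norm (col c - B c))\<^sup>2)"
    proof (rule ccontr)
      define M where "M = (\<Sum>c\<in>C. (norm (col c - B c))\<^sup>2)"
      assume "\<not> \<epsilon> \<le> (\<Sum>c\<in>C. (norm (col c - B c))\<^sup>2)"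
      then have M: "M < (1 / (K * n))\<^sup>2" unfolding M_def \<epsilon>_def by simp
      have each: "norm (col c - B c) < 1 / (K * n)" if "c \<in> C" for c
      proof -
        have "(norm (col c - B c))\<^sup>2 \<le> M" unfolding M_def
          by (rule member_le_sum[OF that _ assms(1)]) simp
        then have "(norm (col c - B c))\<^sup>2 < (1 / (K * n))\<^sup>2" using M by simp
        then show ?thesis using Kpos npos by (simp add: power2_less_imp_less)
      qed
      have lc0: "\<bar>lam c0\<bar> > 0" using lam(2) c0(2) by fastforce
      have "(\<Sum>y\<in>C. lam y *\<^sub>R col y) = (\<Sum>y\<in>C. lam y *\<^sub>R (col y - B y))"
        using lam(1) by (simp add: scaleR_diff_right sum_subtractf)
      then have "\<bar>lam c0\<bar> \<le> K * norm (\<Sum>y\<in>C. lam y *\<^sub>R (col y - B y))"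
        using K c0(1) by metis
      also have "\<dots> \<le> K * (\<Sum>y\<in>C. \<bar>lam y\<bar> * norm (col y - B y))"
        using Kpos by (intro mult_left_mono) (auto intro: order_trans[OF norm_sum] simp: norm_scaleR)
      also have "\<dots> \<le> K * (\<Sum>y\<in>C. \<bar>lam c0\<bar> * norm (col y - B y))"
        using Kpos c0(2) by (intro mult_left_mono sum_mono mult_right_mono) auto
      also have "\<dots> < K * (\<Sum>y\<in>C. \<bar>lam c0\<bar> * (1 / (K * n)))"
        using Kpos lc0 each assms(1) Cne
        by (intro mult_strict_left_mono sum_strict_mono mult_strict_left_mono) auto
      also have "\<dots> = \<bar>lam c0\<bar>" using Kpos npos unfolding n_def by simp
      finally show False by simp
    qed
  qed
qed

lemma arith1:
  fixes \<delta> li \<rho> b :: real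
  assumes "0 < \<delta>" "\<delta> < 1" "li \<ge> 1" "0 \<le> \<rho>" "\<rho> \<le> \<delta> / 4" "b > 0"
  shows "(1 - \<delta>) * li * (li * b\<^sup>2 + \<rho> * b\<^sup>2) \<le> (li * b)\<^sup>2 * (1 - \<delta> / 2)"
proof -
  have "(1 - \<delta>) * (li + \<rho>) \<le> li * (1 - \<delta> / 2)"
  proof -
    have "(1 - \<delta>) * \<rho> \<le> \<rho>" using assms by (simp add: mult_left_le_one_le)
    also have "\<dots> \<le> li * \<delta> / 2"
    proof -
      have "1 * \<delta> \<le> li * \<delta>" using assms by (intro mult_right_mono) auto
      then show ?thesis using assms by linarith
    qed
    finally show ?thesis by (simp add: algebra_simps)
  qed
  then have "li * b\<^sup>2 * ((1 - \<delta>) * (li + \<rho>)) \<le> li * b\<^sup>2 * (li * (1 - \<delta> / 2))"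
    using assms by (intro mult_left_mono) auto
  then show ?thesis by (simp add: power2_eq_square algebra_simps)
qed

lemma arith2:
  fixes \<delta> li lp N \<rho> b b' r :: real
  assumes "0 < \<delta>" "\<delta> < 1" "li \<ge> 1" "li \<le> N" "lp \<ge> 1" "0 \<le> \<rho>" "\<rho> \<le> \<delta> / 4"
    "b > 0" "b' > 0" "b \<le> r * b'" "0 < r" "r \<le> 1 / (4 * N)"
  shows "(1 - \<delta>) * li * (li * b\<^sup>2 + \<rho> * b\<^sup>2) \<le> (lp * b')\<^sup>2 * (1 - \<delta> / 2)"
proof -
  have N1: "N \<ge> 1" using assms by simp
  have "(1 - \<delta>) * li * (li * b\<^sup>2 + \<rho> * b\<^sup>2) \<le> N * (N * b\<^sup>2 + 1 * b\<^sup>2)"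
  proof -
    have h: "(1 - \<delta>) * li \<le> li" using assms by (simp add: mult_left_le_one_le)
    have h2: "(1 - \<delta>) * li \<le> N" using h assms by linarith
    show ?thesis by (intro mult_mono add_mono mult_right_mono) (use h2 assms in auto)
  qed
  also have "\<dots> \<le> 2 * N\<^sup>2 * b\<^sup>2"
  proof -
    have h: "1 * b\<^sup>2 \<le> N * b\<^sup>2" using N1 by (intro mult_right_mono) auto
    have h': "N * (1 * b\<^sup>2) \<le> N * (N * b\<^sup>2)" using h N1 by (intro mult_left_mono) auto
    then show ?thesis by (simp add: power2_eq_square algebra_simps)
  qed
  also have "\<dots> \<le> 2 * N\<^sup>2 * (r * b')\<^sup>2"
    using assms N1 by (intro mult_left_mono power_mono) auto
  also have "\<dots> = 2 * (N * r)\<^sup>2 * b'\<^sup>2" by (simp add: power2_eq_square)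
  also have "\<dots> \<le> 2 * (1/4)\<^sup>2 * b'\<^sup>2"
  proof -
    have "N * r \<le> 1/4" using assms(12) N1 by (simp add: field_simps)
    moreover have "N * r \<ge> 0" using N1 assms by simp
    ultimately have "(N * r)\<^sup>2 \<le> (1/4)\<^sup>2" by (intro power_mono) auto
    then show ?thesis by (intro mult_right_mono mult_left_mono) auto
  qed
  also have "\<dots> \<le> (lp * b')\<^sup>2 * (1 - \<delta> / 2)"
  proof -
    have "b' \<le> lp * b'" using assms mult_right_mono[of 1 lp b'] by simp
    then have hX: "b'\<^sup>2 \<le> (lp * b')\<^sup>2" using assms by (intro power_mono) auto
    have h1: "(lp * b')\<^sup>2 * (1/2) \<le> (lp * b')\<^sup>2 * (1 - \<delta>/2)"
      using assms by (intro mult_left_mono) auto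
    have "2 * (1/4)\<^sup>2 * b'\<^sup>2 = b'\<^sup>2 / 8" by (simp add: power2_eq_square)
    also have "\<dots> \<le> (lp * b')\<^sup>2 * (1/2)" using hX zero_le_power2[of b'] by linarith
    also note h1
    finally show ?thesis .
  qed
  finally show ?thesis .
qed

theorem lemma4:
  fixes \<delta> :: real and t :: nat and l :: "nat \<Rightarrow> nat"
    and a :: "nat \<Rightarrow> nat \<Rightarrow> real ^ 'm" and v :: "nat \<Rightarrow> real ^ 'm"
  assumes "0 < \<delta>" "\<delta> < 1" "t \<ge> 1"
    and "\<forall>i\<in>{1..t}. l i \<ge> 1"
    and unit_a: "\<forall>i\<in>{1..t}. \<forall>j\<in>{1..l i}. norm (a i j) = 1"
    and gen_pos: "\<forall>i\<in>{1..t}. \<forall>J. J \<subset> {1..l i} \<longrightarrow>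
        (\<forall>c. (\<Sum>j\<in>J. c j *\<^sub>R a i j) = 0 \<longrightarrow> (\<forall>j\<in>J. c j = 0))"
    and sum_zero: "\<forall>i\<in>{1..t}. (\<Sum>j\<in>{1..l i}. a i j) = 0"
    and orth_a: "\<forall>i\<in>{1..t}. \<forall>i'\<in>{1..t}. i \<noteq> i' \<longrightarrow>
        (\<forall>j\<in>{1..l i}. \<forall>j'\<in>{1..l i'}. a i j \<bullet> a i' j' = 0)"
    and unit_v: "\<forall>i\<in>{1..t}. norm (v i) = 1"
    and orth_v: "\<forall>i\<in>{1..t}. \<forall>i'\<in>{1..t}. i \<noteq> i' \<longrightarrow> v i \<bullet> v i' = 0"
    and orth_va: "\<forall>i\<in>{1..t}. \<forall>i'\<in>{1..t}. \<forall>j\<in>{1..l i'}. v i \<bullet> a i' j = 0"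
  shows "\<exists>\<alpha> \<beta> :: nat \<Rightarrow> real. (\<forall>i\<in>{1..t}. \<alpha> i > 0 \<and> \<beta> i > 0) \<and>
    (let C = (SIGMA i:{1..t}. {1..l i});
         col = (\<lambda>(i, j). \<alpha> i *\<^sub>R a i j + \<beta> i *\<^sub>R v i)
     in \<forall>i\<in>{1..t}. let k = (\<Sum>i'\<in>{1..i}. l i') - 1 in
        \<forall>S. S \<subseteq> C \<and> card S = k \<longrightarrow>
          Er col C S / OPT col C k \<ge> (1 - \<delta>) * real (l i))"

proof -
  define C where "C = (SIGMA i:{1..t}. {1..l i})"
  have finC: "finite C" unfolding C_def by auto
  define N where "N = (\<Sum>i\<in>{1..t}. l i)"
  have cardC: "card C = N" unfolding C_def N_def by simp
  have lN: "l i \<le> N" if "i \<in> {1..t}" for i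
    unfolding N_def by (rule member_le_sum[OF that]) auto
  have l1: "l i \<ge> 1" if "i \<in> {1..t}" for i using assms(4) that by blast
  have N1: "N \<ge> 1"
  proof -
    have h: "1 \<in> {1..t}" using assms(3) by simp
    show ?thesis using lN[OF h] l1[OF h] by linarith
  qed
  have va: "a i j \<bullet> v i' = 0" if "i' \<in> {1..t}" "i \<in> {1..t}" "j \<in> {1..l i}" for i i' j
    using orth_va that by (simp add: inner_commute)
  have fi_sub: "fam_indep (a i) J" if "i \<in> {1..t}" "J \<subset> {1..l i}" for i J
    unfolding fam_indep_def using that(2) by (rule mp[OF spec[OF bspec[OF gen_pos that(1)], of J]])
  have fi_l1: "fam_indep (a i) {1..l i - 1}" if "i \<in> {1..t}" for i
  proof -
    have ps: "{1..l i - 1} \<subset> {1..l i}" using l1[OF that] by auto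
    show ?thesis by (rule fi_sub[OF that ps])
  qed
  have gex: "\<forall>c\<in>C. \<exists>K g. linear g \<and> (\<forall>j\<in>{1..l (fst c)} - {snd c}. g (a (fst c) j) = 1)
      \<and> (\<forall>z. \<bar>g z\<bar> \<le> K * norm z)"
  proof
    fix c assume c: "c \<in> C"
    then have i: "fst c \<in> {1..t}" "snd c \<in> {1..l (fst c)}" unfolding C_def by auto
    have ps: "{1..l (fst c)} - {snd c} \<subset> {1..l (fst c)}" using i(2) by blast
    have fic: "fam_indep (a (fst c)) ({1..l (fst c)} - {snd c})" by (rule fi_sub[OF i(1) ps])
    have fin: "finite ({1..l (fst c)} - {snd c})" by simp
    obtain g where g: "linear g" "\<forall>j\<in>{1..l (fst c)} - {snd c}. g (a (fst c) j) = 1"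
      "\<exists>K. \<forall>z. \<bar>g z\<bar> \<le> K * norm z"
      using fam_functional[OF fin fic, of "\<lambda>_. 1"] by blast
    then show "\<exists>K g. linear g \<and> (\<forall>j\<in>{1..l (fst c)} - {snd c}. g (a (fst c) j) = 1)
      \<and> (\<forall>z. \<bar>g z\<bar> \<le> K * norm z)" by blast
  qed
  have "\<exists>Kf. \<forall>c\<in>C. \<exists>g. linear g \<and> (\<forall>j\<in>{1..l (fst c)} - {snd c}. g (a (fst c) j) = 1)
      \<and> (\<forall>z. \<bar>g z\<bar> \<le> Kf c * norm z)" using bchoice[OF gex] .
  then obtain Kf where Kf: "\<forall>c\<in>C. \<exists>g. linear g \<and> (\<forall>j\<in>{1..l (fst c)} - {snd c}. g (a (fst c) j) = 1)
      \<and> (\<forall>z. \<bar>g z\<bar> \<le> Kf c * norm z)" ..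
  define K where "K = (\<Sum>c\<in>C. \<bar>Kf c\<bar>) + 1"
  have Kpos: "K > 0" unfolding K_def by (simp add: add_nonneg_pos sum_nonneg)
  have gK: "\<exists>g. linear g \<and> (\<forall>j\<in>{1..l i} - {j0}. g (a i j) = 1) \<and> (\<forall>z. \<bar>g z\<bar> \<le> K * norm z)"
    if "i \<in> {1..t}" "j0 \<in> {1..l i}" for i j0
  proof -
    have c: "(i, j0) \<in> C" using that unfolding C_def by auto
    have "\<exists>g. linear g \<and> (\<forall>j\<in>{1..l i} - {j0}. g (a i j) = 1) \<and> (\<forall>z. \<bar>g z\<bar> \<le> Kf (i, j0) * norm z)"
      using bspec[OF Kf c] by simp
    then obtain g where g: "linear g" "\<forall>j\<in>{1..l i} - {j0}. g (a i j) = 1" "\<forall>z. \<bar>g z\<bar> \<le> Kf (i, j0) * norm z"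
      by blast
    have "\<bar>Kf (i, j0)\<bar> \<le> (\<Sum>c\<in>C. \<bar>Kf c\<bar>)" by (rule member_le_sum[OF c _ finC]) simp
    then have "Kf (i, j0) \<le> K" unfolding K_def by linarith
    then have "\<forall>z. \<bar>g z\<bar> \<le> K * norm z"
      using g(3) order_trans mult_right_mono[OF \<open>Kf (i, j0) \<le> K\<close> norm_ge_zero] by blast
    then show ?thesis using g(1,2) by blast
  qed
  define lam where "lam = 2 * K / \<delta> + 1"
  define r where "r = \<delta> / (2 * N * (lam + 1))"
  define al where "al = (\<lambda>i::nat. lam * r ^ i)"
  define be where "be = (\<lambda>i::nat. r ^ i)"
  have lam1: "lam \<ge> 1" unfolding lam_def using Kpos assms(1) by simp
  have rpos: "r > 0" unfolding r_def using N1 lam1 assms(1) by simp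
  have r4N: "r \<le> 1 / (4 * N)"
  proof -
    have "2 * N * (lam + 1) \<ge> 4 * N" using lam1 N1 by simp
    then have "\<delta> / (2 * N * (lam + 1)) \<le> 1 / (2 * N * (lam + 1))" using assms(2) N1 lam1
      by (simp add: divide_right_mono)
    also have "\<dots> \<le> 1 / (4 * N)" using \<open>2 * N * (lam + 1) \<ge> 4 * N\<close> N1
      by (intro divide_left_mono) auto
    finally show ?thesis unfolding r_def .
  qed
  have r1: "r < 1"
  proof -
    have "(1::real) / (4 * N) \<le> 1 / 4" using N1 by (intro divide_left_mono) auto
    then show ?thesis using r4N by linarith
  qed
  have alpos: "al i > 0" for i unfolding al_def using lam1 rpos by simp
  have bepos: "be i > 0" for i unfolding be_def using rpos by simp
  have Klam: "K / lam \<le> \<delta> / 2"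
  proof -
    have p1: "0 < 2 * K / \<delta>" using Kpos assms(1) by simp
    have p2: "2 * K / \<delta> \<le> lam" unfolding lam_def by simp
    have p3: "0 < lam * (2 * K / \<delta>)" using p1 lam1 by (intro mult_pos_pos) auto
    have "K / lam \<le> K / (2 * K / \<delta>)" by (rule divide_left_mono[OF p2 _ p3]) (use Kpos in simp)
    also have "\<dots> = \<delta> / 2" using Kpos assms(1) by simp
    finally show ?thesis .
  qed
  define \<rho> where "\<rho> = N * (lam\<^sup>2 + 1) * r\<^sup>2"
  have rho0: "\<rho> \<ge> 0" unfolding \<rho>_def by simp
  have rho4: "\<rho> \<le> \<delta> / 4"
  proof -
    have Np: "real N > 0" using N1 by simp
    have h1: "lam\<^sup>2 + 1 \<le> (lam + 1)\<^sup>2" using lam1 by (simp add: power2_eq_square algebra_simps)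
    have d: "2 * N * (lam + 1) \<noteq> 0" using Np lam1 by simp
    have e: "r * (2 * N * (lam + 1)) = \<delta>" unfolding r_def using d by simp
    have "2 * (N * (lam + 1) * r) = \<delta>" using e by (simp add: mult_ac)
    then have e2: "N * (lam + 1) * r = \<delta> / 2" by simp
    have e3: "N * (lam + 1)\<^sup>2 * r\<^sup>2 = (N * (lam + 1) * r)\<^sup>2 / N" using Np
      by (simp add: power2_eq_square)
    have "\<rho> \<le> N * (lam + 1)\<^sup>2 * r\<^sup>2" unfolding \<rho>_def using h1 Np
      by (intro mult_right_mono mult_left_mono) auto
    also have "\<dots> = (\<delta> / 2)\<^sup>2 / N" unfolding e3 e2 ..
    also have "\<dots> \<le> (\<delta> / 2)\<^sup>2 / 1" using N1 by (intro divide_left_mono) auto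
    also have "\<dots> \<le> \<delta> / 4" using assms(1,2) by (simp add: power2_eq_square field_simps)
    finally show ?thesis .
  qed
  define col where "col = (\<lambda>(i, j). al i *\<^sub>R a i j + be i *\<^sub>R v i)"
  have colv: "col (p, q) = al p *\<^sub>R a p q + be p *\<^sub>R v p" for p q by (simp add: col_def)
  have orth_gen: "(x1 *\<^sub>R a p q + y1 *\<^sub>R v p) \<bullet> (x2 *\<^sub>R a p' q' + y2 *\<^sub>R v p') = 0"
    if "p \<in> {1..t}" "p' \<in> {1..t}" "p \<noteq> p'" "q \<in> {1..l p}" "q' \<in> {1..l p'}" for x1 y1 x2 y2 p p' q q'
  proof -
    have "a p q \<bullet> a p' q' = 0" using orth_a that by blast
    moreover have "a p q \<bullet> v p' = 0" using va that by blast
    moreover have "v p \<bullet> a p' q' = 0" using orth_va that by blast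
    moreover have "v p \<bullet> v p' = 0" using orth_v that by blast
    ultimately show ?thesis by (simp add: inner_add_left inner_add_right)
  qed
  have colblock: "fam_indep (\<lambda>j. col (p, j)) {1..l p}" if p: "p \<in> {1..t}" for p
  proof -
    have "fam_indep (\<lambda>j. al p *\<^sub>R a p j + be p *\<^sub>R v p) {1..l p}"
    proof (rule col_block_indep)
      show "1 \<le> l p" using l1[OF p] .
      show "(\<Sum>j\<in>{1..l p}. a p j) = 0" using sum_zero p by blast
      show "fam_indep (a p) {1..l p - 1}" using fi_l1[OF p] .
      show "\<forall>j\<in>{1..l p}. a p j \<bullet> v p = 0" using va p by blast
      show "norm (v p) = 1" using unit_v p by blast
      show "0 < al p" by (rule alpos)
      show "0 < be p" by (rule bepos)
    qed
    then show ?thesis by (simp add: colv)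
  qed
  have colindep: "fam_indep col C"
    unfolding C_def
  proof (rule fam_indep_blocks)
    show "finite {1..t}" by simp
    show "\<forall>r\<in>{1..t}. finite {1..l r}" by simp
    show "\<forall>r\<in>{1..t}. fam_indep (\<lambda>j. col (r, j)) {1..l r}" using colblock by blast
    show "\<forall>r\<in>{1..t}. \<forall>r'\<in>{1..t}. r \<noteq> r' \<longrightarrow> (\<forall>j\<in>{1..l r}. \<forall>j'\<in>{1..l r'}. col (r, j) \<bullet> col (r', j') = 0)"
      using orth_gen by (simp add: colv)
  qed
  have vunit: "v p \<bullet> v p = 1" if "p \<in> {1..t}" for p
    using unit_v that by (simp add: dot_square_norm)
  have main: "(1 - \<delta>) * real (l i) \<le> Er col C S / OPT col C ((\<Sum>i'\<in>{1..i}. l i') - 1)"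
    if i: "i \<in> {1..t}" and S: "S \<subseteq> C" "card S = (\<Sum>i'\<in>{1..i}. l i') - 1" for i S
  proof -
    define L where "L = (\<Sum>i'\<in>{1..i}. l i')"
    have it: "i \<le> t" "1 \<le> i" using i by auto
    have Lpos: "L \<ge> 1"
    proof -
      have "l i \<le> L" unfolding L_def by (rule member_le_sum) (use it in auto)
      then show ?thesis using l1[OF i] by linarith
    qed
    have LN: "L \<le> N" unfolding L_def N_def by (rule sum_mono2) (use it in auto)
    define k where "k = L - 1"
    have kN: "k < card C" unfolding k_def cardC using Lpos LN by linarith
    obtain \<epsilon> where \<epsilon>: "\<epsilon> > 0" "\<forall>B. dim (span (B ` C)) = k \<longrightarrow> \<epsilon> \<le> (\<Sum>c\<in>C. (norm (col c - B c))\<^sup>2)"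
      using OPT_pos[OF finC colindep kN] by blast
    define Bf where "Bf = (\<lambda>c::nat \<times> nat. if fst c < i then col c else if fst c = i then al i *\<^sub>R a i (snd c) else 0)"
    define Jf where "Jf = (\<lambda>p. if p < i then {1..l p} else {1..l p - 1})"
    define I0 where "I0 = Sigma {1..i} Jf"
    have I0C: "I0 \<subseteq> C" unfolding I0_def Jf_def C_def using it by (auto split: if_splits)
    have finI0: "finite I0" using finite_subset[OF I0C finC] .
    have Bform: "Bf (p, q) = (if p < i then al p else al i) *\<^sub>R a p q + (if p < i then be p else 0) *\<^sub>R v p"
      if "p \<le> i" for p q
      using that by (auto simp: Bf_def colv)
    have fiB: "fam_indep Bf I0"
      unfolding I0_def
    proof (rule fam_indep_blocks)
      show "finite {1..i}" by simp
      show "\<forall>r\<in>{1..i}. finite (Jf r)" by (simp add: Jf_def)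
      show "\<forall>r\<in>{1..i}. fam_indep (\<lambda>j. Bf (r, j)) (Jf r)"
      proof
        fix p assume p: "p \<in> {1..i}"
        then have pt: "p \<in> {1..t}" using it by auto
        show "fam_indep (\<lambda>j. Bf (p, j)) (Jf p)"
        proof (cases "p < i")
          case True
          then have "(\<lambda>j. Bf (p, j)) = (\<lambda>j. col (p, j))" by (simp add: Bf_def)
          moreover have "Jf p = {1..l p}" using True by (simp add: Jf_def)
          ultimately show ?thesis using colblock[OF pt] by simp
        next
          case False
          then have pi: "p = i" using p by auto
          have fa: "fam_indep (\<lambda>j. al i *\<^sub>R a i j) {1..l i - 1}"
            unfolding fam_indep_def
          proof (intro allI impI)
            fix c assume "(\<Sum>j\<in>{1..l i - 1}. c j *\<^sub>R al i *\<^sub>R a i j) = 0"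
            then have s0: "(\<Sum>j\<in>{1..l i - 1}. (c j * al i) *\<^sub>R a i j) = 0" by simp
            have fr: "\<forall>c'. (\<Sum>j\<in>{1..l i - 1}. c' j *\<^sub>R a i j) = 0 \<longrightarrow> (\<forall>j\<in>{1..l i - 1}. c' j = 0)"
              using fi_l1[OF i] unfolding fam_indep_def by blast
            have "\<forall>j\<in>{1..l i - 1}. c j * al i = 0" using spec[OF fr, of "\<lambda>j. c j * al i"] s0 by blast
            then show "\<forall>j\<in>{1..l i - 1}. c j = 0" using alpos[of i] by simp
          qed
          have "(\<lambda>j. Bf (p, j)) = (\<lambda>j. al i *\<^sub>R a i j)" using pi by (simp add: Bf_def)
          moreover have "Jf p = {1..l i - 1}" using pi by (simp add: Jf_def)
          ultimately show ?thesis using fa by simp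
        qed
      qed
      show "\<forall>r\<in>{1..i}. \<forall>r'\<in>{1..i}. r \<noteq> r' \<longrightarrow> (\<forall>j\<in>Jf r. \<forall>j'\<in>Jf r'. Bf (r, j) \<bullet> Bf (r', j') = 0)"
      proof (intro ballI impI)
        fix p p' q q' assume pp: "p \<in> {1..i}" "p' \<in> {1..i}" "p \<noteq> p'" and qq: "q \<in> Jf p" "q' \<in> Jf p'"
        have q1: "q \<in> {1..l p}" "q' \<in> {1..l p'}" using qq by (auto simp: Jf_def split: if_splits)
        have "p \<in> {1..t}" "p' \<in> {1..t}" using pp it by auto
        then show "Bf (p, q) \<bullet> Bf (p', q') = 0"
          using Bform[of p q] Bform[of p' q'] pp q1 orth_gen by simp
      qed
    qed
    have cardI0: "card I0 = k"
    proof -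
      have "card I0 = (\<Sum>p\<in>{1..i}. card (Jf p))" unfolding I0_def by (simp add: Jf_def)
      moreover have "(\<Sum>p\<in>{1..i}. card (Jf p) + (if p = i then 1 else 0)) = L"
        unfolding L_def
      proof (rule sum.cong[OF refl])
        fix p assume p: "p \<in> {1..i}"
        have "l p \<ge> 1" using l1 p it by auto
        then show "card (Jf p) + (if p = i then 1 else 0) = l p" using p by (auto simp: Jf_def)
      qed
      moreover have "(\<Sum>p\<in>{1..i}. card (Jf p) + (if p = i then 1 else 0)) = (\<Sum>p\<in>{1..i}. card (Jf p)) + 1"
        using it by (simp add: sum.distrib)
      ultimately show ?thesis unfolding k_def by linarith
    qed
    have spanB: "span (Bf ` C) = span (Bf ` I0)"
    proof (rule antisym)
      show "span (Bf ` I0) \<subseteq> span (Bf ` C)" using I0C by (intro span_mono image_mono)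
      have "Bf ` C \<subseteq> span (Bf ` I0)"
      proof
        fix z assume "z \<in> Bf ` C"
        then obtain p q where pq: "(p, q) \<in> C" "z = Bf (p, q)" by auto
        have pt: "p \<in> {1..t}" "q \<in> {1..l p}" using pq(1) unfolding C_def by auto
        show "z \<in> span (Bf ` I0)"
        proof (cases "p < i")
          case True
          then have "(p, q) \<in> I0" using pt unfolding I0_def Jf_def by auto
          then show ?thesis using pq(2) by (auto intro: span_base)
        next
          case False
          show ?thesis
          proof (cases "p = i")
            case pi: True
            show ?thesis
            proof (cases "q < l i")
              case True
              then have "(p, q) \<in> I0" using pt pi it unfolding I0_def Jf_def by auto
              then show ?thesis using pq(2) by (auto intro: span_base)
            next
              case False
              then have ql: "q = l i" using pt pi by auto
              have li: "{1..l i} = insert (l i) {1..l i - 1}" using l1[OF i] by auto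
              have "0 = (\<Sum>j\<in>{1..l i}. a i j)" using sum_zero i by simp
              also have "\<dots> = a i (l i) + (\<Sum>j\<in>{1..l i - 1}. a i j)" unfolding li by (subst sum.insert) auto
              finally have "a i (l i) = - (\<Sum>j\<in>{1..l i - 1}. a i j)" by (simp add: eq_neg_iff_add_eq_0)
              then have "z = - (\<Sum>j\<in>{1..l i - 1}. Bf (i, j))"
                using pq(2) ql pi by (simp add: Bf_def scaleR_sum_right)
              moreover have "(\<Sum>j\<in>{1..l i - 1}. Bf (i, j)) \<in> span (Bf ` I0)"
              proof (rule span_sum)
                fix j assume "j \<in> {1..l i - 1}"
                then have "(i, j) \<in> I0" using it unfolding I0_def Jf_def by auto
                then show "Bf (i, j) \<in> span (Bf ` I0)" by (auto intro: span_base)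
              qed
              ultimately show ?thesis by (simp add: span_neg)
            qed
          next
            case False
            then have "z = 0" using pq(2) \<open>\<not> p < i\<close> by (simp add: Bf_def)
            then show ?thesis by (simp add: span_zero)
          qed
        qed
      qed
      then show "span (Bf ` C) \<subseteq> span (Bf ` I0)" by (intro span_minimal) (auto simp: subspace_span)
    qed
    have dimB: "dim (span (Bf ` C)) = k"
    proof -
      have "dim (span (Bf ` C)) = card (Bf ` I0)"
        unfolding spanB by (rule dim_span_eq_card_independent[OF fam_indep_independent[OF finI0 fiB]])
      also have "\<dots> = card I0" by (rule card_image[OF fam_indep_inj[OF finI0 fiB]])
      finally show ?thesis using cardI0 by simp
    qed
    define U where "U = real (l i) * (be i)\<^sup>2 + \<rho> * (be i)\<^sup>2"
    have costB: "(\<Sum>c\<in>C. (norm (col c - Bf c))\<^sup>2) \<le> U"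
    proof -
      define D where "D = (lam\<^sup>2 + 1) * r ^ (2 * i + 2)"
      have D0: "D \<ge> 0" unfolding D_def using rpos by simp
      have pt: "(norm (col c - Bf c))\<^sup>2 \<le> (if fst c = i then (be i)\<^sup>2 else 0) + D" if c: "c \<in> C" for c
      proof -
        obtain p q where pq: "c = (p, q)" by (cases c)
        have pt: "p \<in> {1..t}" "q \<in> {1..l p}" using c pq unfolding C_def by auto
        show ?thesis
        proof (cases "p < i")
          case True
          then show ?thesis using D0 pq by (simp add: Bf_def)
        next
          case False
          show ?thesis
          proof (cases "p = i")
            case True
            then have "col c - Bf c = be i *\<^sub>R v i" using pq by (simp add: Bf_def colv)
            then have "(norm (col c - Bf c))\<^sup>2 = (be i)\<^sup>2" using unit_v i bepos[of i] by simp
            then show ?thesis using True pq D0 by simp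
          next
            case False
            then have pi: "p > i" using \<open>\<not> p < i\<close> by simp
            then have "col c - Bf c = al p *\<^sub>R a p q + be p *\<^sub>R v p" using pq by (simp add: Bf_def colv)
            moreover have "orthogonal (al p *\<^sub>R a p q) (be p *\<^sub>R v p)"
              using va[of p p q] pt by (simp add: orthogonal_def)
            ultimately have "(norm (col c - Bf c))\<^sup>2 = (norm (al p *\<^sub>R a p q))\<^sup>2 + (norm (be p *\<^sub>R v p))\<^sup>2"
              by (simp add: norm_add_Pythagorean)
            also have "\<dots> = (al p)\<^sup>2 + (be p)\<^sup>2"
              using unit_a unit_v pt alpos[of p] bepos[of p] by simp
            also have "\<dots> = (lam\<^sup>2 + 1) * r ^ (2 * p)"
              unfolding al_def be_def by (simp add: power_mult_distrib power_mult algebra_simps)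
            also have "\<dots> \<le> D" unfolding D_def using rpos r1 pi
              by (intro mult_left_mono power_decreasing) auto
            finally show ?thesis using pq pi by simp
          qed
        qed
      qed
      have "(\<Sum>c\<in>C. (norm (col c - Bf c))\<^sup>2) \<le> (\<Sum>c\<in>C. (if fst c = i then (be i)\<^sup>2 else 0) + D)"
        by (rule sum_mono) (rule pt)
      also have "\<dots> = (\<Sum>c\<in>C. (if fst c = i then (be i)\<^sup>2 else 0)) + N * D"
        by (simp add: sum.distrib cardC)
      also have "(\<Sum>c\<in>C. (if fst c = i then (be i)\<^sup>2 else 0)) = real (l i) * (be i)\<^sup>2"
      proof -
        have "(\<Sum>c\<in>C. (if fst c = i then (be i)\<^sup>2 else 0)) = (\<Sum>c\<in>{c\<in>C. fst c = i}. (be i)\<^sup>2)"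
          using sum.inter_filter[OF finC, of "\<lambda>_. (be i)\<^sup>2" "\<lambda>c. fst c = i"] by simp
        also have "{c\<in>C. fst c = i} = {i} \<times> {1..l i}" using i unfolding C_def by auto
        finally show ?thesis by simp
      qed
      also have "N * D = \<rho> * (be i)\<^sup>2"
      proof -
        have "r ^ (2 * i + 2) = r\<^sup>2 * (r ^ i)\<^sup>2" by (simp only: power_add power_mult[symmetric] mult.commute[of i 2] mult.commute[of "r ^ (2 * i)"])
        then show ?thesis unfolding D_def \<rho>_def be_def by simp
      qed
      finally show ?thesis unfolding U_def .
    qed
    define Oset where "Oset = {(\<Sum>c\<in>C. (norm (col c - B c))\<^sup>2) | B. dim (span (B ` C)) = k}"
    have OPTeq: "OPT col C k = Inf Oset" unfolding OPT_def Oset_def ..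
    have inO: "(\<Sum>c\<in>C. (norm (col c - Bf c))\<^sup>2) \<in> Oset" unfolding Oset_def using dimB by blast
    have OPTU: "OPT col C k \<le> U"
    proof -
      have "bdd_below Oset" unfolding Oset_def by (rule bdd_belowI[of _ 0]) (auto intro: sum_nonneg)
      then have "Inf Oset \<le> (\<Sum>c\<in>C. (norm (col c - Bf c))\<^sup>2)" using inO by (rule cInf_lower[rotated])
      then show ?thesis using costB OPTeq by simp
    qed
    have OPTpos: "OPT col C k > 0"
    proof -
      have "\<epsilon> \<le> Inf Oset" using inO \<epsilon>(2) unfolding Oset_def by (intro cInf_greatest) auto
      then show ?thesis using \<epsilon>(1) OPTeq by simp
    qed
    have Erlow: "\<exists>i'\<in>{1..i}. (real (l i') * be i')\<^sup>2 * (1 - \<delta> / 2) \<le> Er col C S"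
    proof -
      have "\<exists>i'\<in>{1..i}. \<exists>j0\<in>{1..l i'}. (i', j0) \<notin> S"
      proof (rule ccontr)
        assume "\<not> ?thesis"
        then have sub: "Sigma {1..i} (\<lambda>p. {1..l p}) \<subseteq> S" by auto
        have "card (Sigma {1..i} (\<lambda>p. {1..l p})) \<le> card S"
          by (rule card_mono[OF finite_subset[OF S(1) finC] sub])
        moreover have "card (Sigma {1..i} (\<lambda>p. {1..l p})) = L" unfolding L_def by simp
        ultimately show False using S(2) Lpos unfolding L_def by linarith
      qed
      then obtain i' j0 where ij: "i' \<in> {1..i}" "j0 \<in> {1..l i'}" "(i', j0) \<notin> S" by blast
      have i't: "i' \<in> {1..t}" using ij it by auto
      have l1': "l i' \<ge> 1" using l1[OF i't] .
      define x where "x = col (i', j0)"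
      define y where "y = orth_proj (span (col ` S)) x"
      have x_C: "(i', j0) \<in> C" using ij i't unfolding C_def by auto
      have Er1: "(norm (x - y))\<^sup>2 \<le> Er col C S"
        unfolding x_def y_def by (rule Er_ge_term[OF finC x_C])
      have yS: "y \<in> span (col ` S)" unfolding y_def by (rule orth_proj_in)
      define Bk where "Bk = {i'} \<times> {1..l i'}"
      define E where "E = insert (v i') (a i' ` {1..l i'})"
      have colS: "col ` S = col ` (S \<inter> Bk) \<union> col ` (S - Bk)" by auto
      have colE: "col (i', q) \<in> span E" if "q \<in> {1..l i'}" for q
      proof -
        have "a i' q \<in> span E" "v i' \<in> span E" unfolding E_def using that by (auto intro: span_base)
        then show ?thesis unfolding colv by (intro span_add span_scale)
      qed
      have xE: "x \<in> span E" unfolding x_def using colE ij(2) .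
      have Y1E: "col ` (S \<inter> Bk) \<subseteq> span E" using colE unfolding Bk_def by auto
      have Y2o: "\<forall>u\<in>col ` (S - Bk). \<forall>w\<in>E. u \<bullet> w = 0"
      proof (intro ballI)
        fix u w assume u: "u \<in> col ` (S - Bk)" and w: "w \<in> E"
        then obtain p q where pq: "(p, q) \<in> S" "(p, q) \<notin> Bk" "u = col (p, q)" by auto
        have pt: "p \<in> {1..t}" "q \<in> {1..l p}" using pq(1) S(1) unfolding C_def by auto
        have pne: "p \<noteq> i'" using pq(2) pt unfolding Bk_def by auto
        show "u \<bullet> w = 0"
        proof (cases "w = v i'")
          case True
          have "u \<bullet> w = (al p *\<^sub>R a p q + be p *\<^sub>R v p) \<bullet> (0 *\<^sub>R a i' j0 + 1 *\<^sub>R v i')"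
            using True pq(3) by (simp add: colv)
          also have "\<dots> = 0" by (rule orth_gen[OF pt(1) i't pne pt(2) ij(2)])
          finally show ?thesis .
        next
          case False
          then obtain q' where q': "q' \<in> {1..l i'}" "w = a i' q'" using w unfolding E_def by auto
          have "u \<bullet> w = (al p *\<^sub>R a p q + be p *\<^sub>R v p) \<bullet> (1 *\<^sub>R a i' q' + 0 *\<^sub>R v i')"
            using q' pq(3) by (simp add: colv)
          also have "\<dots> = 0" by (rule orth_gen[OF pt(1) i't pne pt(2) q'(1)])
          finally show ?thesis .
        qed
      qed
      obtain y1 where y1: "y1 \<in> span (col ` (S \<inter> Bk))" "(norm (x - y1))\<^sup>2 \<le> (norm (x - y))\<^sup>2"
        using split_dist[OF yS[unfolded colS] xE Y1E Y2o] by blast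
      define J where "J = {1..l i'} - {j0}"
      define gen where "gen = (\<lambda>j. al i' *\<^sub>R a i' j + be i' *\<^sub>R v i')"
      have Y1J: "col ` (S \<inter> Bk) \<subseteq> gen ` J"
      proof
        fix z assume "z \<in> col ` (S \<inter> Bk)"
        then obtain q where q: "(i', q) \<in> S" "q \<in> {1..l i'}" "z = col (i', q)" unfolding Bk_def by auto
        have "q \<noteq> j0" using q(1) ij(3) by auto
        then show "z \<in> gen ` J" using q unfolding J_def gen_def colv by auto
      qed
      have y1J: "y1 \<in> span (gen ` J)" using y1(1) span_mono[OF Y1J] by blast
      define sg where "sg = (\<Sum>j\<in>J. gen j)"
      have sgJ: "sg \<in> span (gen ` J)" unfolding sg_def by (intro span_sum) (auto intro: span_base)
      have finJ: "finite J" unfolding J_def by simp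
      have cardJ: "real (card J) = real (l i') - 1" unfolding J_def using ij(2) l1' by (simp add: of_nat_diff)
      have sumJ: "(\<Sum>j\<in>J. a i' j) = - a i' j0"
      proof -
        have "0 = (\<Sum>j\<in>{1..l i'}. a i' j)" using sum_zero i't by simp
        also have "\<dots> = a i' j0 + (\<Sum>j\<in>J. a i' j)" unfolding J_def
          using sum.remove[of "{1..l i'}" j0 "a i'"] ij(2) by simp
        finally show ?thesis by (simp add: eq_neg_iff_add_eq_0 add.commute)
      qed
      have "sg = al i' *\<^sub>R (\<Sum>j\<in>J. a i' j) + (\<Sum>j\<in>J. be i' *\<^sub>R v i')"
        unfolding sg_def gen_def by (simp add: sum.distrib scaleR_sum_right)
      also have "(\<Sum>j\<in>J. be i' *\<^sub>R v i') = real (card J) *\<^sub>R (be i' *\<^sub>R v i')" by (rule sum_constant_scaleR)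
      also have "real (card J) *\<^sub>R (be i' *\<^sub>R v i') = ((real (l i') - 1) * be i') *\<^sub>R v i'"
        unfolding scaleR_scaleR cardJ ..
      finally have sg_eq: "sg = - (al i' *\<^sub>R a i' j0) + ((real (l i') - 1) * be i') *\<^sub>R v i'"
        unfolding sumJ by simp
      define c0 where "c0 = real (l i') * be i'"
      have c0pos: "c0 > 0" unfolding c0_def using l1' bepos[of i'] by simp
      have xs: "x + sg = c0 *\<^sub>R v i'"
        unfolding x_def colv sg_eq c0_def by (simp add: algebra_simps)
      define t' where "t' = (1 / c0) *\<^sub>R (y1 + sg)"
      have t'J: "t' \<in> span (gen ` J)" unfolding t'_def using y1J sgJ by (intro span_scale span_add)
      have "x - y1 = c0 *\<^sub>R (v i' - t')"
        unfolding t'_def using c0pos xs by (simp add: algebra_simps)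
      then have nx: "(norm (x - y1))\<^sup>2 = c0\<^sup>2 * (norm (v i' - t'))\<^sup>2"
        using c0pos by (simp add: power_mult_distrib)
      obtain g where g: "linear g" "\<forall>j\<in>{1..l i'} - {j0}. g (a i' j) = 1" "\<forall>z. \<bar>g z\<bar> \<le> K * norm z"
        using gK[OF i't ij(2)] by blast
      have bb: "(norm (v i' - t'))\<^sup>2 \<ge> 1 - (be i' * K / al i')\<^sup>2"
      proof (rule block_bound)
        show "norm (v i') = 1" using unit_v i't by blast
        show "\<forall>j\<in>J. a i' j \<bullet> v i' = 0" using va[OF i't i't] unfolding J_def by blast
        show "linear g" by (rule g(1))
        show "\<forall>j\<in>J. g (a i' j) = 1" using g(2) unfolding J_def .
        show "\<forall>z. \<bar>g z\<bar> \<le> K * norm z" by (rule g(3))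
        show "0 < al i'" by (rule alpos)
        show "0 \<le> be i'" using bepos[of i'] by simp
        show "t' \<in> span ((\<lambda>j. al i' *\<^sub>R a i' j + be i' *\<^sub>R v i') ` J)" using t'J unfolding gen_def .
      qed
      have eqK: "be i' * K / al i' = K / lam" unfolding al_def be_def using rpos lam1 by simp
      moreover have "(K / lam)\<^sup>2 \<le> \<delta> / 2"
      proof -
        have "(K / lam)\<^sup>2 \<le> (\<delta> / 2)\<^sup>2" using Klam Kpos lam1 by (intro power_mono) auto
        also have "\<dots> \<le> \<delta> / 2" using assms(1,2) by (simp add: power2_eq_square field_simps)
        finally show ?thesis .
      qed
      ultimately have "(norm (v i' - t'))\<^sup>2 \<ge> 1 - \<delta> / 2" using bb unfolding eqK by linarith
      then have "c0\<^sup>2 * (1 - \<delta> / 2) \<le> c0\<^sup>2 * (norm (v i' - t'))\<^sup>2" by (intro mult_left_mono) auto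
      then have "c0\<^sup>2 * (1 - \<delta> / 2) \<le> Er col C S" using nx y1(2) Er1 by linarith
      then show ?thesis using ij(1) unfolding c0_def by blast
    qed
    have ErU: "(1 - \<delta>) * real (l i) * U \<le> Er col C S"
    proof -
      obtain i' where i': "i' \<in> {1..i}" "(real (l i') * be i')\<^sup>2 * (1 - \<delta> / 2) \<le> Er col C S"
        using Erlow by blast
      have i't: "i' \<in> {1..t}" using i' it by auto
      show ?thesis
      proof (cases "i' = i")
        case True
        have "(1 - \<delta>) * real (l i) * U \<le> (real (l i) * be i)\<^sup>2 * (1 - \<delta> / 2)"
          unfolding U_def using arith1[OF assms(1,2) _ rho0 rho4 bepos[of i]] l1[OF i] by simp
        then show ?thesis using i'(2) unfolding True by linarith
      next
        case False
        then have lt: "Suc i' \<le> i" using i' by auto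
        have "be i \<le> r * be i'" unfolding be_def
          using power_decreasing[OF lt, of r] rpos r1 by simp
        moreover have r4N': "r \<le> 1 / (4 * real N)" using r4N by simp
        ultimately have "(1 - \<delta>) * real (l i) * U \<le> (real (l i') * be i')\<^sup>2 * (1 - \<delta> / 2)"
          unfolding U_def using arith2[OF assms(1,2) _ _ _ rho0 rho4 bepos[of i] bepos[of i'] _ rpos r4N']
            l1[OF i] l1[OF i't] lN[OF i] by simp
        then show ?thesis using i'(2) by linarith
      qed
    qed
    have "(1 - \<delta>) * real (l i) * OPT col C k \<le> (1 - \<delta>) * real (l i) * U"
      using OPTU assms(2) by (intro mult_left_mono) auto
    then have "(1 - \<delta>) * real (l i) * OPT col C k \<le> Er col C S" using ErU by linarith
    then have "(1 - \<delta>) * real (l i) \<le> Er col C S / OPT col C k" using OPTpos by (simp add: pos_le_divide_eq)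
    then show ?thesis unfolding k_def L_def .
  qed

  show ?thesis
  proof (rule exI[of _ al], rule exI[of _ be], intro conjI)
    show "\<forall>i\<in>{1..t}. 0 < al i \<and> 0 < be i" using alpos bepos by blast
    show "let C = SIGMA i:{1..t}. {1..l i}; col = \<lambda>(i, j). al i *\<^sub>R a i j + be i *\<^sub>R v i
     in \<forall>i\<in>{1..t}. let k = (\<Sum>i'\<in>{1..i}. l i') - 1 in \<forall>S. S \<subseteq> C \<and> card S = k \<longrightarrow>
          (1 - \<delta>) * real (l i) \<le> Er col C S / OPT col C k"
      unfolding Let_def C_def[symmetric] col_def[symmetric] using main by blast
  qed
qed

end
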